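(* Let $A\in\mathbb{R}_{\max}^{n\times n}$ with $\lambda(A)=0$, let $g=g(\mathrm{crit}(A))\ge2$, assume $(n,g)\ne(2,2)$, $T_1(A)=\mathrm{DM}(g,n)$, and that $\mathrm{crit}(A)$ contains, up to choice of first node, a unique cycle $Z_0$ of length $g$. Let $W_0$ be an interesting walk, and renumber the nodes so that $1,\dots,g$ are the nodes of $Z_0$ and $W_0=(g+1)\cdots n\,(1\cdots n)^g$. Then $\mathcal{D}(A)$ has, up to the choice of its first node, a unique Hamiltonian cycle of maximal weight among all Hamiltonian cycles, and it is the cycle $(1,2,\dots,n,1)$.
   Context: Max-plus semiring $\mathbb{R}_{\max}=\mathbb{R}\cup\{-\infty\}$ with $a\oplus b=\max(a,b)$, $a\otimes b=a+b$; $(AB)_{ij}=\max_k(a_{ik}+b_{kj})$; $A^t$ is the $t$-th max-plus power, $A^0=I$. $\mathcal{D}(A)$ is the digraph on $\{1,\dots,n\}$ with arc $(i,j)$ of weight $a_{ij}$ whenever $a_{ij}\ne-\infty$. A walk is a node sequence whose consecutive pairs are arcs, its length is its number of arcs and its weight the sum of its arc weights; cycles are closed walks with no proper closed subwalk; a Hamiltonian cycle visits every node. $\lambda(A)$ is the maximal cycle mean. $\mathrm{crit}(A)$ is the subgraph of all nodes and arcs of cycles attaining $\lambda(A)$; its nodes are critical. $g(\mathrm{crit}(A))$ is the maximum over strongly connected components of $\mathrm{crit}(A)$ of their minimal cycle length. The cyclicity of $\mathrm{crit}(A)$ is the lcm over components of the gcd of their cycle lengths. CSR terms: with $\gamma$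 the cyclicity of $\mathrm{crit}(A)$ and $\lambda(A)=0$, $M=I\oplus N\oplus\dots\oplus N^{n-1}$ where $N=A^\gamma$: $c_{ij}=m_{ij}$ if $j$ critical, else $-\infty$; $r_{ij}=m_{ij}$ if $i$ critical, else $-\infty$; $s_{ij}=a_{ij}$ if $(i,j)$ is an arc of $\mathrm{crit}(A)$, else $-\infty$; $CS^tR[A]$ is the product $CS^tR$. $B_N$ has $(B_N)_{ij}=-\infty$ if $i$ or $j$ is critical and $a_{ij}$ otherwise. $T_1(A)$ is the least $T\ge0$ with $A^t=CS^tR[A]\oplus B_N^t$ for all $t\ge T$. $\mathrm{DM}(g,n)=g(n-2)+n$. Twice optimal / interesting walks: a walk $W$ from $i$ to $j$ passing through at least one node of $Z_0$ is twice optimal if it has maximal weight among all walks from $i$ to $j$ passing through a node of $Z_0$ whose length is congruent to the length of $W$ modulo $g$, and has minimal length among all such walks of maximal weight. It is interesting if it is twice optimal and has length $\mathrm{DM}(g,n)+g-1$. *)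

theory Defs
  imports Complex_Main "HOL-Library.Extended_Real"
begin

text \<open>Max-plus matrices of size n are functions nat => nat => ereal whose relevant
  entries are those with indices in {1..n}; entries are assumed to differ from +infinity
  (so that they lie in R union {-infinity}).\<close>

type_synonym mat = "nat \<Rightarrow> nat \<Rightarrow> ereal"

definition mp_mult :: "nat \<Rightarrow> mat \<Rightarrow> mat \<Rightarrow> mat" where
  "mp_mult n A B = (\<lambda>i j. SUP k\<in>{1..n}. A i k + B k j)"

definition mp_id :: mat where
  "mp_id = (\<lambda>i j. if i = j then 0 else -\<infinity>)"

primrec mp_pow :: "nat \<Rightarrow> mat \<Rightarrow> nat \<Rightarrow> mat" where
  "mp_pow n A 0 = mp_id"
| "mp_pow n A (Suc t) = mp_mult n (mp_pow n A t) A"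

definition is_walk :: "nat \<Rightarrow> mat \<Rightarrow> nat list \<Rightarrow> bool" where
  "is_walk n A w \<longleftrightarrow> w \<noteq> [] \<and> set w \<subseteq> {1..n} \<and>
     (\<forall>k. Suc k < length w \<longrightarrow> A (w!k) (w!Suc k) \<noteq> -\<infinity>)"

definition wlen :: "nat list \<Rightarrow> nat" where
  "wlen w = length w - 1"

definition wweight :: "mat \<Rightarrow> nat list \<Rightarrow> ereal" where
  "wweight A w = (\<Sum>k<length w - 1. A (w!k) (w!Suc k))"

definition is_cycle :: "nat \<Rightarrow> mat \<Rightarrow> nat list \<Rightarrow> bool" where
  "is_cycle n A c \<longleftrightarrow> is_walk n A c \<and> length c \<ge> 2 \<and> hd c = last c \<and> distinct (butlast c)"

definition same_cycle :: "nat list \<Rightarrow> nat list \<Rightarrow> bool" where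
  "same_cycle c d \<longleftrightarrow> (\<exists>k. butlast c = rotate k (butlast d))"

definition ham_cycle :: "nat \<Rightarrow> mat \<Rightarrow> nat list \<Rightarrow> bool" where
  "ham_cycle n A c \<longleftrightarrow> is_cycle n A c \<and> set c = {1..n}"

definition cycle_mean :: "mat \<Rightarrow> nat list \<Rightarrow> ereal" where
  "cycle_mean A c = wweight A c / ereal (real (wlen c))"

text \<open>lambda(A), the maximal cycle mean (-infinity if there is no cycle).\<close>

definition mcm :: "nat \<Rightarrow> mat \<Rightarrow> ereal" where
  "mcm n A = (SUP c\<in>{c. is_cycle n A c}. cycle_mean A c)"

definition crit_cycle :: "nat \<Rightarrow> mat \<Rightarrow> nat list \<Rightarrow> bool" where
  "crit_cycle n A c \<longleftrightarrow> is_cycle n A c \<and> cycle_mean A c = mcm n A"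

definition crit_nodes :: "nat \<Rightarrow> mat \<Rightarrow> nat set" where
  "crit_nodes n A = {i. \<exists>c. crit_cycle n A c \<and> i \<in> set c}"

definition crit_arcs :: "nat \<Rightarrow> mat \<Rightarrow> (nat \<times> nat) set" where
  "crit_arcs n A = {(c!k, c!Suc k) | c k. crit_cycle n A c \<and> Suc k < length c}"

definition crit_graph_cycle :: "nat \<Rightarrow> mat \<Rightarrow> nat list \<Rightarrow> bool" where
  "crit_graph_cycle n A c \<longleftrightarrow> is_cycle n A c \<and>
     (\<forall>k. Suc k < length c \<longrightarrow> (c!k, c!Suc k) \<in> crit_arcs n A)"

definition crit_comp :: "nat \<Rightarrow> mat \<Rightarrow> nat \<Rightarrow> nat set" where
  "crit_comp n A i = {j. (i, j) \<in> (crit_arcs n A)\<^sup>* \<and> (j, i) \<in> (crit_arcs n A)\<^sup>*}"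

definition crit_components :: "nat \<Rightarrow> mat \<Rightarrow> nat set set" where
  "crit_components n A = crit_comp n A ` crit_nodes n A"

definition comp_cycle_lengths :: "nat \<Rightarrow> mat \<Rightarrow> nat set \<Rightarrow> nat set" where
  "comp_cycle_lengths n A C = wlen ` {c. crit_graph_cycle n A c \<and> set c \<subseteq> C}"

definition girth_crit :: "nat \<Rightarrow> mat \<Rightarrow> nat" where
  "girth_crit n A = Max ((\<lambda>C. Min (comp_cycle_lengths n A C)) ` crit_components n A)"

definition cyclicity_crit :: "nat \<Rightarrow> mat \<Rightarrow> nat" where
  "cyclicity_crit n A = Lcm ((\<lambda>C. Gcd (comp_cycle_lengths n A C)) ` crit_components n A)"

definition csr_M :: "nat \<Rightarrow> mat \<Rightarrow> mat" where
  "csr_M n A = (\<lambda>i j. SUP k\<in>{..<n}. mp_pow n (mp_pow n A (cyclicity_crit n A)) k i j)"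

definition csr_C :: "nat \<Rightarrow> mat \<Rightarrow> mat" where
  "csr_C n A = (\<lambda>i j. if j \<in> crit_nodes n A then csr_M n A i j else -\<infinity>)"

definition csr_R :: "nat \<Rightarrow> mat \<Rightarrow> mat" where
  "csr_R n A = (\<lambda>i j. if i \<in> crit_nodes n A then csr_M n A i j else -\<infinity>)"

definition csr_S :: "nat \<Rightarrow> mat \<Rightarrow> mat" where
  "csr_S n A = (\<lambda>i j. if (i, j) \<in> crit_arcs n A then A i j else -\<infinity>)"

definition csr_term :: "nat \<Rightarrow> mat \<Rightarrow> nat \<Rightarrow> mat" where
  "csr_term n A t = mp_mult n (mp_mult n (csr_C n A) (mp_pow n (csr_S n A) t)) (csr_R n A)"

definition B_N :: "nat \<Rightarrow> mat \<Rightarrow> mat" where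
  "B_N n A = (\<lambda>i j. if i \<in> crit_nodes n A \<or> j \<in> crit_nodes n A then -\<infinity> else A i j)"

definition T1 :: "nat \<Rightarrow> mat \<Rightarrow> nat" where
  "T1 n A = (LEAST T. \<forall>t\<ge>T. \<forall>i\<in>{1..n}. \<forall>j\<in>{1..n}.
      mp_pow n A t i j = max (csr_term n A t i j) (mp_pow n (B_N n A) t i j))"

definition DM :: "nat \<Rightarrow> nat \<Rightarrow> nat" where
  "DM g n = g * (n - 2) + n"

definition walk_through :: "nat \<Rightarrow> mat \<Rightarrow> nat list \<Rightarrow> nat \<Rightarrow> nat \<Rightarrow> nat list \<Rightarrow> bool" where
  "walk_through n A Z i j w \<longleftrightarrow> is_walk n A w \<and> hd w = i \<and> last w = j \<and> set w \<inter> set Z \<noteq> {}"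

definition twice_optimal :: "nat \<Rightarrow> mat \<Rightarrow> nat \<Rightarrow> nat list \<Rightarrow> nat list \<Rightarrow> bool" where
  "twice_optimal n A g Z w \<longleftrightarrow> walk_through n A Z (hd w) (last w) w \<and>
     (\<forall>v. walk_through n A Z (hd w) (last w) v \<and> wlen v mod g = wlen w mod g \<longrightarrow>
        wweight A v \<le> wweight A w \<and> (wweight A v = wweight A w \<longrightarrow> wlen w \<le> wlen v))"

definition interesting :: "nat \<Rightarrow> mat \<Rightarrow> nat \<Rightarrow> nat list \<Rightarrow> nat list \<Rightarrow> bool" where
  "interesting n A g Z w \<longleftrightarrow> twice_optimal n A g Z w \<and> wlen w = DM g n + g - 1"

end

theory Submission
  imports Defs
begin


fun S :: "('b \<Rightarrow> 'b \<Rightarrow> 'a::comm_monoid_add) \<Rightarrow> 'b list \<Rightarrow> 'a" where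
  "S f [] = 0" | "S f [x] = 0" | "S f (x # y # zs) = f x y + S f (y # zs)"

definition join :: "'b list \<Rightarrow> 'b list \<Rightarrow> 'b list" where
  "join xs ys = xs @ tl ys"

lemma S_join:
  "xs \<noteq> [] \<Longrightarrow> ys \<noteq> [] \<Longrightarrow> last xs = hd ys \<Longrightarrow> S f (join xs ys) = S f xs + S f ys"
proof (induction xs)
  case Nil thus ?case by simp
next
  case (Cons x xs)
  show ?case
  proof (cases xs)
    case Nil then show ?thesis using Cons.prems by (cases ys) (auto simp: join_def)
  next
    case (Cons y r)
    then have "S f (join (x#xs) ys) = f x y + S f (join xs ys)" by (simp add: join_def)
    also have "\<dots> = f x y + (S f xs + S f ys)" using Cons.IH Cons.prems \<open>xs = y#r\<close> by simp
    also have "\<dots> = S f (x#xs) + S f ys" using \<open>xs = y # r\<close> by (simp add: add.assoc)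
    finally show ?thesis .
  qed
qed

lemma wweight_S: "wweight A w = S A w"
proof (induction "A" w rule: S.induct)
  case (3 f x y zs)
  have "wweight f (x # y # zs) = (\<Sum>k<Suc (length zs). f ((x#y#zs)!k) ((x#y#zs)!Suc k))"
    by (simp add: wweight_def)
  also have "\<dots> = f x y + (\<Sum>k<length zs. f ((y#zs)!k) ((y#zs)!Suc k))"
    by (subst sum.lessThan_Suc_shift) simp
  also have "\<dots> = f x y + wweight f (y#zs)" by (simp add: wweight_def)
  finally show ?case using 3 by simp
qed (auto simp: wweight_def)

lemma is_walk_single: "is_walk n A [x] \<longleftrightarrow> x \<in> {1..n}"
  by (auto simp: is_walk_def)

lemma is_walk_Cons2:
  "is_walk n A (x # y # zs) \<longleftrightarrow> x \<in> {1..n} \<and> A x y \<noteq> -\<infinity> \<and> is_walk n A (y # zs)"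
  apply (auto simp: is_walk_def)
  subgoal for k by (cases k) auto
  done

definition rw :: "mat \<Rightarrow> nat list \<Rightarrow> real" where
  "rw A w = S (\<lambda>a b. real_of_ereal (A a b)) w"

lemma wweight_rw:
  assumes fin: "\<forall>i\<in>{1..n}. \<forall>j\<in>{1..n}. A i j \<noteq> \<infinity>"
  shows "is_walk n A w \<Longrightarrow> wweight A w = ereal (rw A w)"
proof (induction w rule: induct_list012)
  case (3 x y zs)
  then have h: "x \<in> {1..n}" "A x y \<noteq> -\<infinity>" "is_walk n A (y # zs)" by (auto simp: is_walk_Cons2)
  have "y \<in> {1..n}" using h(3) by (auto simp: is_walk_def)
  then obtain r where r: "A x y = ereal r" using h fin by (cases "A x y") auto
  then show ?case using 3 h by (simp add: wweight_S rw_def)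
qed (auto simp: wweight_S rw_def)

lemma walk_join:
  "is_walk n A xs \<Longrightarrow> is_walk n A ys \<Longrightarrow> last xs = hd ys \<Longrightarrow> is_walk n A (join xs ys)"
proof (induction xs)
  case Nil thus ?case by (simp add: is_walk_def)
next
  case (Cons x xs)
  show ?case
  proof (cases xs)
    case Nil then show ?thesis using Cons.prems by (cases ys) (auto simp: join_def is_walk_def)
  next
    case (Cons y r)
    have "is_walk n A (x # y # (r @ tl ys))"
      using Cons.IH Cons.prems \<open>xs = y#r\<close> by (auto simp: is_walk_Cons2 join_def)
    then show ?thesis using \<open>xs = y#r\<close> by (simp add: join_def)
  qed
qed

lemma walk_take: "is_walk n A w \<Longrightarrow> 0 < k \<Longrightarrow> is_walk n A (take k w)"
  by (auto simp: is_walk_def dest: in_set_takeD)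

lemma walk_drop: "is_walk n A w \<Longrightarrow> k < length w \<Longrightarrow> is_walk n A (drop k w)"
  by (auto simp: is_walk_def dest: in_set_dropD)

lemma join_take_drop: "k < length xs \<Longrightarrow> join (take (Suc k) xs) (drop k xs) = xs"
  by (metis append_take_drop_id drop_Suc join_def tl_drop)

lemma S_take_drop: "k < length xs \<Longrightarrow> S f xs = S f (take (Suc k) xs) + S f (drop k xs)"
proof -
  assume k: "k < length xs"
  have "take (Suc k) xs \<noteq> []" "drop k xs \<noteq> []" using k by auto
  moreover have "last (take (Suc k) xs) = hd (drop k xs)"
    using k by (simp add: take_Suc_conv_app_nth hd_drop_conv_nth)
  ultimately show ?thesis using S_join[of "take (Suc k) xs" "drop k xs" f] join_take_drop[OF k] by simp
qed

lemma walk_join_D: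
  assumes "is_walk n A (join xs ys)" "xs \<noteq> []" "ys \<noteq> []" "last xs = hd ys"
  shows "is_walk n A xs \<and> is_walk n A ys"
proof -
  have "take (length xs) (join xs ys) = xs" by (simp add: join_def)
  moreover have "drop (length xs - 1) (join xs ys) = ys"
  proof -
    have "drop (length xs - 1) xs = [last xs]"
      using assms(2) by (metis append_butlast_last_id append_eq_conv_conj length_butlast)
    then show ?thesis using assms(3,4) by (simp add: join_def)
  qed
  moreover have "length xs - 1 < length (join xs ys)" using assms(2) by (cases xs) (auto simp: join_def)
  ultimately show ?thesis using walk_take[OF assms(1), of "length xs"] walk_drop[OF assms(1), of "length xs - 1"] assms(2)
    by auto
qed

lemma length_join: "ys \<noteq> [] \<Longrightarrow> length (join xs ys) = length xs + length ys - 1"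
  by (cases ys) (auto simp: join_def)

primrec pw :: "nat list \<Rightarrow> nat \<Rightarrow> nat list" where
  "pw Q 0 = [hd Q]" | "pw Q (Suc k) = join Q (pw Q k)"

lemma pw_props:
  assumes "Q \<noteq> []" "hd Q = last Q"
  shows "pw Q k \<noteq> [] \<and> hd (pw Q k) = hd Q \<and> last (pw Q k) = hd Q \<and> wlen (pw Q k) = k * wlen Q"
proof (induction k)
  case 0 thus ?case by (simp add: wlen_def)
next
  case (Suc k)
  have l: "length (pw Q (Suc k)) = length Q + length (pw Q k) - 1" using Suc by (simp add: length_join)
  have "last (pw Q (Suc k)) = hd Q"
    using Suc assms by (cases "tl (pw Q k) = []") (auto simp: join_def last_tl)
  moreover have "hd (pw Q (Suc k)) = hd Q" using assms by (cases Q) (auto simp: join_def)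
  moreover have "wlen (pw Q (Suc k)) = Suc k * wlen Q"
  proof -
    have "length Q \<ge> 1" "length (pw Q k) \<ge> 1" using Suc assms(1) by (auto simp: Suc_le_eq)
    then show ?thesis using l Suc apply (simp add: wlen_def) by linarith
  qed
  ultimately show ?case using Suc assms(1) by (auto simp: join_def)
qed

lemma pw_S:
  assumes "Q \<noteq> []" "hd Q = last Q"
  shows "S (f::_\<Rightarrow>_\<Rightarrow>real) (pw Q k) = real k * S f Q"
proof (induction k)
  case 0 thus ?case by simp
next
  case (Suc k)
  then show ?case using pw_props[OF assms, of k] assms
    by (simp add: S_join algebra_simps)
qed

lemma pw_walk:
  assumes "Q \<noteq> []" "hd Q = last Q" "is_walk n A Q"
  shows "is_walk n A (pw Q k)"
proof (induction k)
  case 0 thus ?case using assms by (cases Q) (auto simp: is_walk_def)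
next
  case (Suc k) thus ?case using pw_props[OF assms(1,2), of k] assms by (simp add: walk_join)
qed

lemma pw_set: "set Q \<subseteq> set (pw Q (Suc k))"
  by (simp add: join_def)


lemma set_join_sub: "set xs \<subseteq> set (join xs ys)" by (auto simp: join_def)

lemma set_join_sub2: "xs \<noteq> [] \<Longrightarrow> ys \<noteq> [] \<Longrightarrow> last xs = hd ys \<Longrightarrow> set ys \<subseteq> set (join xs ys)"
  by (cases ys) (auto simp: join_def)

lemma last_join: "xs \<noteq> [] \<Longrightarrow> ys \<noteq> [] \<Longrightarrow> last xs = hd ys \<Longrightarrow> last (join xs ys) = last ys"
  by (cases ys) (auto simp: join_def)

lemma hd_join: "xs \<noteq> [] \<Longrightarrow> hd (join xs ys) = hd xs"
  by (auto simp: join_def)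

lemma wlen_join: "xs \<noteq> [] \<Longrightarrow> ys \<noteq> [] \<Longrightarrow> wlen (join xs ys) = wlen xs + wlen ys"
  by (cases xs; cases ys) (auto simp: join_def wlen_def)

definition crot :: "nat list \<Rightarrow> nat list" where
  "crot c = tl c @ [c!1]"

lemma crot_props:
  assumes "length c \<ge> 2" "hd c = last c" "is_walk n A c"
  shows "length (crot c) = length c \<and> hd (crot c) = last (crot c) \<and> is_walk n A (crot c)
    \<and> rw A (crot c) = rw A c \<and> butlast (crot c) = rotate1 (butlast c) \<and> set (crot c) = set c"
proof -
  obtain x y zs where c: "c = x # y # zs" using assms(1)
    by (cases c; cases "tl c") auto
  have lx: "last (y#zs) = x" using assms(2) c by simp
  have e1: "crot c = join (y#zs) [x,y]" by (simp add: crot_def join_def c)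
  have e2: "c = join [x,y] (y#zs)" by (simp add: join_def c)
  have w: "is_walk n A [x,y] \<and> is_walk n A (y#zs)"
    using walk_join_D[of n A "[x,y]" "y#zs"] e2 assms(3) by simp
  have "is_walk n A (crot c)" unfolding e1 by (rule walk_join) (use w lx in auto)
  moreover have "rw A (crot c) = rw A c"
  proof -
    have "rw A (crot c) = rw A (y#zs) + rw A [x,y]" unfolding e1 rw_def by (rule S_join) (use lx in auto)
    moreover have "rw A c = rw A [x,y] + rw A (y#zs)" unfolding rw_def by (subst e2, rule S_join) auto
    ultimately show ?thesis by simp
  qed
  moreover have "butlast (crot c) = rotate1 (butlast c)"
  proof -
    have "butlast (y#zs) @ [x] = y#zs" using lx append_butlast_last_id[of "y#zs"] by simp
    then show ?thesis by (simp add: crot_def c)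
  qed
  moreover have "set (crot c) = set c"
  proof -
    have "x \<in> set (y#zs)" using lx last_in_set[of "y#zs"] by simp
    then show ?thesis by (auto simp: crot_def c)
  qed
  moreover have "length (crot c) = length c" "hd (crot c) = last (crot c)"
    by (auto simp: crot_def c)
  ultimately show ?thesis by simp
qed

lemma crot_iter:
  assumes "length c \<ge> 2" "hd c = last c" "is_walk n A c"
  shows "length ((crot^^k) c) = length c \<and> hd ((crot^^k) c) = last ((crot^^k) c) \<and> is_walk n A ((crot^^k) c)
    \<and> rw A ((crot^^k) c) = rw A c \<and> butlast ((crot^^k) c) = rotate k (butlast c) \<and> set ((crot^^k) c) = set c"
proof (induction k)
  case 0 then show ?case using assms by simp
next
  case (Suc k)
  then have "length ((crot^^k) c) \<ge> 2" using assms by simp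
  then show ?case using crot_props[of "(crot^^k) c" n A] Suc by (simp add: rotate_Suc)
qed

lemma ham_rot:
  assumes ham: "ham_cycle n A c" and n1: "n \<ge> 1"
  shows "\<exists>cn. is_walk n A cn \<and> length cn = n + 1 \<and> hd cn = n \<and> last cn = n \<and> distinct (butlast cn)
     \<and> set cn = {1..n} \<and> rw A cn = rw A c \<and> (\<exists>k. butlast cn = rotate k (butlast c))"
proof -
  have cyc: "is_walk n A c" "length c \<ge> 2" "hd c = last c" "distinct (butlast c)" "set c = {1..n}"
    using ham by (auto simp: ham_cycle_def is_cycle_def)
  obtain x y zs where c: "c = x # y # zs" using cyc(2)
    by (cases c; cases "tl c") auto
  have "set c = set (butlast c @ [last c])" unfolding c by (subst append_butlast_last_id) auto
  then have "set c = insert (last c) (set (butlast c))" by simp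
  moreover have "last c \<in> set (butlast c)" using cyc(3) by (simp add: c)
  ultimately have sb: "set (butlast c) = {1..n}" using cyc(5) by (simp add: insert_absorb)
  have lb: "length (butlast c) = n" using distinct_card[OF cyc(4)] sb by simp
  have "n \<in> set (butlast c)" using sb n1 by simp
  then obtain k where k: "k < n" "butlast c ! k = n" using lb by (metis in_set_conv_nth)
  define d where "d = (crot^^k) c"
  note P = crot_iter[OF cyc(2,3,1), of k, folded d_def]
  have "length (butlast d) = n" using P lb by simp
  then have bd: "butlast d \<noteq> []" using n1 by (cases "butlast d") auto
  have "hd d = hd (butlast d)" using bd by (cases d) auto
  also have "\<dots> = n" using P k lb bd by (simp add: hd_rotate_conv_nth)
  finally have hdn: "hd d = n" .
  have "length d = n + 1" using P lb cyc(2) by simp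
  moreover have "distinct (butlast d)" using P cyc(4) by simp
  ultimately show ?thesis using P hdn cyc by (intro exI[of _ d]) auto
qed



lemma concat_rep: "concat (replicate k xs) = tl (pw (n # xs) k)"
  by (induction k) (auto simp: join_def)

lemma cycle_le0:
  assumes "is_cycle n A c" "mcm n A = 0" "wlen c > 0" "wweight A c = ereal r"
  shows "r \<le> 0"
proof -
  have "cycle_mean A c \<le> mcm n A" unfolding mcm_def by (rule SUP_upper) (use assms in auto)
  then have "ereal r / ereal (real (wlen c)) \<le> 0" using assms by (simp add: cycle_mean_def)
  then have "r / real (wlen c) \<le> 0" using assms(3) by simp
  then show ?thesis using assms(3) by (simp add: divide_le_0_iff)
qed

theorem corollaryc:
  fixes n g :: nat and A :: mat and Z0 W0 :: "nat list"
  assumes finite_entries: "\<forall>i\<in>{1..n}. \<forall>j\<in>{1..n}. A i j \<noteq> \<infinity>"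
    and lambda0: "mcm n A = 0"
    and g_def: "g = girth_crit n A"
    and g2: "g \<ge> 2"
    and not22: "(n, g) \<noteq> (2, 2)"
    and T1_DM: "T1 n A = DM g n"
    and Z0_cycle: "crit_graph_cycle n A Z0"
    and Z0_len: "wlen Z0 = g"
    and Z0_unique: "\<forall>c. crit_graph_cycle n A c \<and> wlen c = g \<longrightarrow> same_cycle c Z0"
    and W0_int: "interesting n A g Z0 W0"
    and Z0_nodes: "set Z0 = {1..g}"
    and W0_form: "W0 = [g + 1..<n + 1] @ concat (replicate g [1..<n + 1])"
  shows "ham_cycle n A ([1..<n + 1] @ [1])
    \<and> (\<forall>c. ham_cycle n A c \<longrightarrow> wweight A c \<le> wweight A ([1..<n + 1] @ [1]))
    \<and> (\<forall>c. ham_cycle n A c \<and> wweight A c = wweight A ([1..<n + 1] @ [1])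
           \<longrightarrow> same_cycle c ([1..<n + 1] @ [1]))"
proof -
  define Hp where "Hp = [1..<n+1]"
  define Hn where "Hn = n # Hp"
  define H where "H = Hp @ [1]"
  define P where "P = [g+1..<n+1]"
  have TO: "\<And>v. walk_through n A Z0 (hd W0) (last W0) v \<Longrightarrow> wlen v mod g = wlen W0 mod g \<Longrightarrow>
        wweight A v \<le> wweight A W0 \<and> (wweight A v = wweight A W0 \<longrightarrow> wlen W0 \<le> wlen v)"
    using W0_int by (auto simp: interesting_def twice_optimal_def)
  have W0w: "is_walk n A W0" using W0_int by (simp add: interesting_def twice_optimal_def walk_through_def)
  have "set Z0 \<subseteq> {1..n}" using Z0_cycle by (simp add: crit_graph_cycle_def is_cycle_def is_walk_def)
  then have gn: "g \<le> n" using Z0_nodes g2 by auto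
  have n2: "n \<ge> 2" using gn g2 by simp
  have one_Z0: "1 \<in> set Z0" using Z0_nodes g2 by simp
  have Hp_ne: "Hp \<noteq> []" "hd Hp = 1" "last Hp = n" "length Hp = n" using n2 by (auto simp: Hp_def)
  have Hn_ne: "Hn \<noteq> []" "hd Hn = last Hn" "hd Hn = n" using Hp_ne by (auto simp: Hn_def)
  have wlenHn: "wlen Hn = n" by (simp add: Hn_def Hp_def wlen_def)
  have W0eq: "W0 = P @ tl (pw Hn g)" using W0_form by (simp add: concat_rep P_def Hn_def Hp_def)
  have pwg: "pw Hn g = join Hn (pw Hn (g - 1))" using g2 by (cases g) auto
  note pwp = pw_props[OF Hn_ne(1,2)]
  have Hn_split: "Hn = join [n,1] Hp" using Hp_ne by (cases Hp) (auto simp: Hn_def join_def)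
  have H_split: "H = join Hp [n,1]" by (simp add: H_def join_def)
  have pwne: "pw Hn k \<noteq> []" "hd (pw Hn k) = n" "last (pw Hn k) = n" "wlen (pw Hn k) = k * n" for k
    using pwp[of k] Hn_ne wlenHn by auto
  have W0eq2: "W0 = join Hp (pw Hn (g-1))" if "g = n"
  proof -
    have "P = []" using that by (simp add: P_def)
    then show ?thesis using W0eq pwg by (simp add: join_def Hn_def)
  qed
  have W0eq1: "W0 = join P (pw Hn g)" using W0eq by (simp add: join_def)
  have Pprops: "P \<noteq> []" "last P = n" "hd P = g + 1" if "g < n"
  proof -
    show "P \<noteq> []" "last P = n" using that by (auto simp: P_def)
    show "hd P = g + 1" using that unfolding P_def by (subst upt_conv_Cons) auto
  qed
  have Hn_walk: "is_walk n A Hn"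
  proof (cases "g < n")
    case True
    then have "is_walk n A (pw Hn g)" using walk_join_D[of n A P "pw Hn g"] W0w W0eq1 Pprops pwne by auto
    then show ?thesis using pwg walk_join_D[of n A Hn "pw Hn (g-1)"] pwne Hn_ne by auto
  next
    case False
    then have "g = n" using gn by simp
    then have "is_walk n A (pw Hn (g-1))" using walk_join_D[of n A Hp "pw Hn (g-1)"] W0w W0eq2 Hp_ne pwne by auto
    moreover have "pw Hn (g-1) = join Hn (pw Hn (g-2))" using g2 by (cases g; cases "g - 1") auto
    ultimately show ?thesis using walk_join_D[of n A Hn "pw Hn (g-2)"] pwne Hn_ne by auto
  qed
  have Hp_walk: "is_walk n A Hp" using walk_drop[OF Hn_walk, of 1] Hp_ne(1) by (simp add: Hn_def)
  have n1w: "is_walk n A [n,1]" using walk_take[OF Hn_walk, of 2] Hp_ne by (cases Hp) (auto simp: Hn_def)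
  have H_walk: "is_walk n A H" unfolding H_split by (rule walk_join) (use Hp_walk n1w Hp_ne in auto)
  have rwH: "rw A H = rw A Hn" unfolding H_split rw_def by (subst Hn_split, simp add: S_join Hp_ne add.commute)
  have bH: "butlast H = Hp" by (simp add: H_def)
  have H_cyc: "is_cycle n A H" unfolding is_cycle_def bH
    using H_walk Hp_ne n2 by (auto simp: H_def Hp_def)
  have H_ham: "ham_cycle n A H" using H_cyc n2 by (auto simp: ham_cycle_def H_def Hp_def)
  have wlenH: "wlen H = n" by (simp add: H_def Hp_def wlen_def)
  have rwH0: "rw A H \<le> 0"
    by (rule cycle_le0[OF H_cyc lambda0]) (use wlenH n2 wweight_rw[OF finite_entries H_walk] in auto)
  have wwr: "\<And>w. is_walk n A w \<Longrightarrow> wweight A w = ereal (rw A w)"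
    using wweight_rw[OF finite_entries] by blast
  have rwpw: "rw A (pw Q k) = real k * rw A Q" if "Q \<noteq> []" "hd Q = last Q" for Q k
    unfolding rw_def by (rule pw_S[OF that])
  show ?thesis
  proof (cases "g < n")
    case False
    then have gn': "g = n" using gn by simp
    have hw: "hd W0 = 1" "last W0 = n" using W0eq2[OF gn'] Hp_ne pwne
      by (auto simp: hd_join last_join)
    have wt: "walk_through n A Z0 (hd W0) (last W0) Hp"
      using hw Hp_walk Hp_ne one_Z0 hd_in_set[OF Hp_ne(1)] unfolding walk_through_def by auto
    have wlHp: "wlen Hp = n - 1" using Hp_ne by (simp add: wlen_def)
    have wlW: "wlen W0 = (n - 1) + (g - 1) * n"
      unfolding W0eq2[OF gn'] using Hp_ne pwne wlHp by (simp add: wlen_join)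
    have "wlen Hp mod g = wlen W0 mod g" unfolding wlW wlHp gn' by simp
    from TO[OF wt this] have to: "wweight A Hp \<le> wweight A W0 \<and> (wweight A Hp = wweight A W0 \<longrightarrow> wlen W0 \<le> wlen Hp)" .
    have rwW: "rw A W0 = rw A Hp + real (g - 1) * rw A Hn"
      using W0eq2[OF gn'] Hp_ne pwne rwpw[OF Hn_ne(1,2)] by (simp add: rw_def S_join)
    have "(g - 1) * n > 0" using g2 n2 by simp
    then have "wlen W0 > wlen Hp" unfolding wlW wlHp by linarith
    then have "rw A Hp < rw A W0" using to wwr[OF Hp_walk] wwr[OF W0w] by auto
    then have "real (g - 1) * rw A Hn > 0" using rwW by linarith
    then have "rw A Hn > 0" using g2 by (simp add: zero_less_mult_iff)
    then show ?thesis using rwH rwH0 by simp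
  next
    case True
    note PP = Pprops[OF True]
    have hw: "hd W0 = g+1" "last W0 = n" using W0eq1 PP pwne by (auto simp: hd_join last_join)
    have wlW: "wlen W0 = wlen P + g * n" unfolding W0eq1 using PP pwne by (simp add: wlen_join)
    have "rw A W0 = rw A P + rw A (pw Hn g)" unfolding W0eq1 rw_def by (rule S_join) (use PP pwne in auto)
    then have rwW: "rw A W0 = rw A P + real g * rw A Hn" using rwpw[OF Hn_ne(1,2), of g] by simp
    have Pw: "is_walk n A P" using walk_join_D[of n A P "pw Hn g"] W0w W0eq1 PP pwne by auto
    have CMP: "rw A Q \<le> real g * rw A Hn \<and> (rw A Q = real g * rw A Hn \<longrightarrow> g * n \<le> wlen Q)"
      if Q: "is_walk n A Q" "Q \<noteq> []" "hd Q = n" "last Q = n" "1 \<in> set Q" "wlen Q mod g = 0" for Q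
    proof -
      define V where "V = join P Q"
      have Vw: "is_walk n A V" unfolding V_def by (rule walk_join) (use Pw Q PP in auto)
      have "hd V = hd W0" "last V = last W0" using PP Q hw by (auto simp: V_def hd_join last_join)
      moreover have "1 \<in> set V" using set_join_sub2[of P Q] PP Q by (auto simp: V_def)
      ultimately have wt: "walk_through n A Z0 (hd W0) (last W0) V"
        using Vw one_Z0 unfolding walk_through_def by auto
      have wlV: "wlen V = wlen P + wlen Q" unfolding V_def using PP Q by (simp add: wlen_join)
      have "(wlen P + wlen Q) mod g = wlen P mod g" by (metis add.right_neutral mod_add_right_eq Q(6))
      moreover have "(wlen P + g * n) mod g = wlen P mod g" by simp
      ultimately have "wlen V mod g = wlen W0 mod g" unfolding wlV wlW by simp
      from TO[OF wt this] have to: "wweight A V \<le> wweight A W0 \<and> (wweight A V = wweight A W0 \<longrightarrow> wlen W0 \<le> wlen V)" .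
      have "rw A V = rw A P + rw A Q" unfolding V_def rw_def by (rule S_join) (use PP Q in auto)
      then show ?thesis using to wwr[OF Vw] wwr[OF W0w] rwW wlV wlW by auto
    qed
    have PWC: "rw A Q \<le> rw A Hn \<and> (rw A Q = rw A Hn \<longrightarrow> n \<le> wlen Q)"
      if Q: "is_walk n A Q" "Q \<noteq> []" "hd Q = n" "last Q = n" "1 \<in> set Q" for Q
    proof -
      have cl: "hd Q = last Q" using Q by simp
      have gs: "g = Suc (g - 1)" using g2 by simp
      have "set Q \<subseteq> set (pw Q g)" using pw_set[of Q "g-1"] gs by metis
      then have C: "rw A (pw Q g) \<le> real g * rw A Hn \<and> (rw A (pw Q g) = real g * rw A Hn \<longrightarrow> g * n \<le> wlen (pw Q g))"
        using CMP[of "pw Q g"] pw_walk[OF Q(2) cl Q(1), of g] pw_props[OF Q(2) cl, of g] Q by auto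
      have r: "rw A (pw Q g) = real g * rw A Q" using rwpw[OF Q(2) cl] .
      have l: "wlen (pw Q g) = g * wlen Q" using pw_props[OF Q(2) cl, of g] by simp
      have gp: "real g > 0" using g2 by simp
      have "rw A Q \<le> rw A Hn" using C r gp by (simp add: mult_le_cancel_left_pos)
      moreover have "rw A Q = rw A Hn \<longrightarrow> n \<le> wlen Q" using C r l g2 by auto
      ultimately show ?thesis by blast
    qed
    have maxp: "rw A c \<le> rw A Hn" if hc: "ham_cycle n A c" for c
    proof -
      obtain cn where cn: "is_walk n A cn" "length cn = n + 1" "hd cn = n" "last cn = n"
        "set cn = {1..n}" "rw A cn = rw A c" using ham_rot[OF hc] n2 by auto
      have "cn \<noteq> []" using cn(2) by auto
      then show ?thesis using PWC[of cn] cn n2 by auto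
    qed
    have Hn_nth: "Hn ! i = i" if "1 \<le> i" "i \<le> n" for i
      using that by (cases i) (auto simp: Hn_def Hp_def nth_Cons' simp del: upt_Suc)
    have lHn: "length Hn = n + 1" using Hp_ne by (simp add: Hn_def)
    have uniq: "same_cycle c H" if ham: "ham_cycle n A c" and eqw: "rw A c = rw A Hn" for c
    proof (rule ccontr)
      assume ns: "\<not> same_cycle c H"
      obtain cn k where cn: "is_walk n A cn" "length cn = n + 1" "hd cn = n" "last cn = n"
        "distinct (butlast cn)" "set cn = {1..n}" "rw A cn = rw A c" and kk: "butlast cn = rotate k (butlast c)"
        using ham_rot[OF ham] n2 by auto
      have cnne: "cn \<noteq> []" using cn(2) by auto
      have cn0: "cn ! 0 = n" using hd_conv_nth[OF cnne] cn(3) by simp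
      have cnn: "cn ! n = n" using last_conv_nth[OF cnne] cn(2,4) by simp
      have "cn \<noteq> Hn"
      proof
        assume "cn = Hn"
        then have e: "rotate k (butlast c) = rotate (n - 1) Hp"
          using kk Hp_ne n2 by (simp add: Hn_def Hp_def rotate_drop_take)
        have "length (butlast cn) = n" using cn(2) by simp
        then have lbc: "length (butlast c) = n" using kk by simp
        have "butlast c = rotate (n - k mod n) (rotate k (butlast c))"
        proof -
          have "(n - k mod n + k) mod n = 0" using n2
            by (metis add.commute mod_add_left_eq mod_less_divisor le_add_diff_inverse2 mod_self
                 less_imp_le_nat zero_less_iff_neq_zero not_numeral_le_zero)
          then show ?thesis using rotate_id[of "n - k mod n + k" "butlast c"] lbc by (simp add: rotate_rotate)
        qed
        also have "\<dots> = rotate (n - k mod n + (n - 1)) Hp" using e by (simp add: rotate_rotate)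
        finally have "same_cycle c H" unfolding same_cycle_def using bH by auto
        then show False using ns by simp
      qed
      then obtain j where j: "j < n + 1" "cn ! j \<noteq> Hn ! j"
        using nth_equalityI[of cn Hn] cn(2) lHn by auto
      have "j \<noteq> 0"
      proof
        assume "j = 0" then show False using j(2) cn0 by (simp add: Hn_def)
      qed
      moreover have "j \<noteq> n" using j cnn Hn_nth[of n] n2 by auto
      ultimately have j1: "1 \<le> j" "j < n" using j by auto
      obtain p where p: "1 \<le> p" "p < n" "cn ! p \<noteq> p" "1 \<in> set (take (p+1) cn)"
      proof (cases "cn ! 1 = 1")
        case True
        have "take (j+1) cn ! 1 = 1" using True j1 by simp
        moreover have "1 < length (take (j+1) cn)" using j1 cn(2) by simp
        ultimately have "1 \<in> set (take (j+1) cn)" using nth_mem[of 1 "take (j+1) cn"] by simp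
        then show ?thesis using that[of j] j1 j Hn_nth by auto
      next
        case False
        have "1 \<in> set cn" using cn(6) n2 by simp
        then obtain q where q: "q < n + 1" "cn ! q = 1" using cn(2) by (auto simp: in_set_conv_nth)
        have "q \<noteq> 0"
        proof
          assume "q = 0" with q cn0 n2 show False by simp
        qed
        moreover have "q \<noteq> n"
        proof
          assume "q = n" with q cnn n2 show False by simp
        qed
        moreover have "q \<noteq> 1" using q False by auto
        ultimately have "q \<noteq> 0" "q \<noteq> n" "q \<noteq> 1" by auto
        then have q1: "1 \<le> q" "q < n" using q by auto
        have "take (q+1) cn ! q = 1" "q < length (take (q+1) cn)" using q cn(2) by auto
        then have "1 \<in> set (take (q+1) cn)" using nth_mem[of q "take (q+1) cn"] by simp
        then show ?thesis using that[of q] q1 q \<open>q \<noteq> 1\<close> by auto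
      qed
      define v where "v = cn ! p"
      have "v \<in> set cn" using p cn(2) by (simp add: v_def)
      then have v1: "1 \<le> v" "v \<le> n" using cn(6) by auto
      have "v \<noteq> n"
      proof
        assume "v = n"
        have "butlast cn ! p = butlast cn ! 0" using p cn(2) cn0 \<open>v = n\<close> by (simp add: nth_butlast v_def)
        then have "p = 0" using nth_eq_iff_index_eq[OF cn(5)] p cn(2) by simp
        then show False using p by simp
      qed
      then have vn: "v < n" using v1 by simp
      have vp: "v \<noteq> p" using p by (simp add: v_def)
      define T1 where "T1 = take (v+1) Hn"
      define D1 where "D1 = drop p cn"
      define T2 where "T2 = take (p+1) cn"
      define D2 where "D2 = drop v Hn"
      have ne: "T1 \<noteq> []" "D1 \<noteq> []" "T2 \<noteq> []" "D2 \<noteq> []"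
        using vn p cn(2) lHn by (auto simp: T1_def D1_def T2_def D2_def)
      have lT1: "last T1 = v" using vn lHn Hn_nth[OF v1] by (simp add: T1_def take_Suc_conv_app_nth)
      have hD1: "hd D1 = v" using p cn(2) by (simp add: D1_def hd_drop_conv_nth v_def)
      have lT2: "last T2 = v" using p cn(2) by (simp add: T2_def take_Suc_conv_app_nth v_def)
      have hD2: "hd D2 = v" using vn lHn Hn_nth[OF v1] by (simp add: D2_def hd_drop_conv_nth)
      have wT1: "is_walk n A T1" unfolding T1_def by (rule walk_take[OF Hn_walk]) simp
      have wD1: "is_walk n A D1" unfolding D1_def by (rule walk_drop[OF cn(1)]) (use p cn(2) in simp)
      have wT2: "is_walk n A T2" unfolding T2_def by (rule walk_take[OF cn(1)]) simp
      have wD2: "is_walk n A D2" unfolding D2_def by (rule walk_drop[OF Hn_walk]) (use vn lHn in simp)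
      define X where "X = join T1 D1"
      define Y where "Y = join T2 D2"
      have Xw: "is_walk n A X" unfolding X_def by (rule walk_join) (use wT1 wD1 lT1 hD1 in auto)
      have Yw: "is_walk n A Y" unfolding Y_def by (rule walk_join) (use wT2 wD2 lT2 hD2 in auto)
      have hT1: "hd T1 = n" by (simp add: T1_def Hn_def)
      have hT2: "hd T2 = n" using cn(3) cnne by (simp add: T2_def)
      have lD1: "last D1 = n" using p cn(2,4) by (simp add: D1_def last_drop)
      have lD2: "last D2 = n" using vn lHn Hn_ne by (simp add: D2_def last_drop)
      have X1: "X \<noteq> []" "hd X = n" "last X = n"
      proof -
        show "X \<noteq> []" using ne(1) by (simp add: X_def join_def)
        show "hd X = n" using hd_join[OF ne(1)] hT1 by (simp add: X_def)
        show "last X = n" using last_join[OF ne(1) ne(2)] lT1 hD1 lD1 by (simp add: X_def)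
      qed
      have Y1: "Y \<noteq> []" "hd Y = n" "last Y = n"
      proof -
        show "Y \<noteq> []" using ne(3) by (simp add: Y_def join_def)
        show "hd Y = n" using hd_join[OF ne(3)] hT2 by (simp add: Y_def)
        show "last Y = n" using last_join[OF ne(3) ne(4)] lT2 hD2 lD2 by (simp add: Y_def)
      qed
      have "T1 ! 1 = 1" "1 < length T1" using Hn_nth[of 1] n2 vn v1 lHn by (auto simp: T1_def)
      then have "1 \<in> set T1" using nth_mem[of 1 T1] by simp
      then have oX: "1 \<in> set X" using set_join_sub[of T1 D1] by (auto simp: X_def)
      have oY: "1 \<in> set Y" using set_join_sub[of T2 D2] p(4) by (auto simp: Y_def T2_def)
      have lX: "wlen X = v + (n - p)" using ne vn p lHn cn(2)
        by (simp add: X_def wlen_join) (simp add: wlen_def T1_def D1_def)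
      have lY: "wlen Y = p + (n - v)" using ne vn p lHn cn(2)
        by (simp add: Y_def wlen_join) (simp add: wlen_def T2_def D2_def)
      have rX: "rw A X = rw A T1 + rw A D1" unfolding X_def rw_def by (rule S_join) (use ne lT1 hD1 in auto)
      have rY: "rw A Y = rw A T2 + rw A D2" unfolding Y_def rw_def by (rule S_join) (use ne lT2 hD2 in auto)
      have sHn: "rw A Hn = rw A T1 + rw A D2" unfolding rw_def T1_def D2_def
        using S_take_drop[of v Hn] vn lHn by simp
      have scn: "rw A cn = rw A T2 + rw A D1" unfolding rw_def T2_def D1_def
        using S_take_drop[of p cn] p cn(2) by simp
      have "rw A X + rw A Y = 2 * rw A Hn" using rX rY sHn scn cn(7) eqw by simp
      moreover have "rw A X \<le> rw A Hn" "rw A Y \<le> rw A Hn"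
        using PWC[OF Xw X1(1-3) oX] PWC[OF Yw Y1(1-3) oY] by auto
      ultimately have "rw A X = rw A Hn" "rw A Y = rw A Hn" by linarith+
      then have "n \<le> wlen X" "n \<le> wlen Y" using PWC[OF Xw X1(1-3) oX] PWC[OF Yw Y1(1-3) oY] by auto
      then show False using lX lY vp vn p by linarith
    qed
    have Heq: "[1..<n+1] @ [1] = H" by (simp add: H_def Hp_def)
    have hamw: "is_walk n A c" if "ham_cycle n A c" for c using that by (simp add: ham_cycle_def is_cycle_def)
    show ?thesis unfolding Heq
      using H_ham maxp uniq wwr[OF H_walk] wwr[OF hamw] rwH by auto
  qed
qed

end
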